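(* Let $I\in\{0,1\}^{n\times m}$, $C\subseteq X$, $D\subseteq Y$ with $I_{ij}=1$ for every $i\in C$ and $j\in D$, and let $J$ be the restriction of $I$ to $D^{\downarrow_I}\times C^{\uparrow_I}$ (i.e. $J\subseteq D^{\downarrow_I}\times C^{\uparrow_I}$ with $\langle i,j\rangle\in J$ iff $I_{ij}=1$). Then $\mathcal{I}_{C,D}=\mathcal{B}(D^{\downarrow_I},C^{\uparrow_I},J)$.
   Context: $X=\{1,\dots,n\}$, $Y=\{1,\dots,m\}$. For a binary relation (formal context) $K\subseteq X'\times Y'$ between sets $X'$ and $Y'$, and $C\subseteq X'$, $D\subseteq Y'$: $C^{\uparrow_K}=\{j\in Y'\mid \forall i\in C: \langle i,j\rangle\in K\}$, $D^{\downarrow_K}=\{i\in X'\mid \forall j\in D: \langle i,j\rangle\in K\}$, and $\mathcal{B}(X',Y',K)=\{\langle C,D\rangle\mid C\subseteq X', D\subseteq Y', C^{\uparrow_K}=D, D^{\downarrow_K}=C\}$. The matrix $I$ is identified with the relation $\{\langle i,j\rangle\mid I_{ij}=1\}\subseteq X\times Y$, and $\mathcal{B}(I)=\mathcal{B}(X,Y,I)$, ordered by $\langle C_1,D_1\rangle\leq\langle C_2,D_2\rangle$ iff $C_1\subseteq C_2$. $\gamma(C)=\langle C^{\uparrow_I\downarrow_I},C^{\uparrow_I}\rangle$, $\mu(D)=\langle D^{\downarrow_I},D^{\downarrow_I\uparrow_I}\rangle$, and $\mathcal{I}_{C,D}=\{c\in\mathcal{B}(I)\mid\gamma(C)\leq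 c\leq\mu(D)\}$. *)

theory Defs
  imports Main
begin

definition up :: "('a \<times> 'b) set \<Rightarrow> 'b set \<Rightarrow> 'a set \<Rightarrow> 'b set" where
  "up K Y' C = {j \<in> Y'. \<forall>i\<in>C. (i, j) \<in> K}"

definition down :: "('a \<times> 'b) set \<Rightarrow> 'a set \<Rightarrow> 'b set \<Rightarrow> 'a set" where
  "down K X' D = {i \<in> X'. \<forall>j\<in>D. (i, j) \<in> K}"

definition concepts :: "'a set \<Rightarrow> 'b set \<Rightarrow> ('a \<times> 'b) set \<Rightarrow> ('a set \<times> 'b set) set" where
  "concepts X' Y' K = {(C, D). C \<subseteq> X' \<and> D \<subseteq> Y' \<and> up K Y' C = D \<and> down K X' D = C}"

definition concept_le :: "('a set \<times> 'b set) \<Rightarrow> ('a set \<times> 'b set) \<Rightarrow> bool" where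
  "concept_le c1 c2 \<longleftrightarrow> fst c1 \<subseteq> fst c2"

definition Xs :: "nat \<Rightarrow> nat set" where "Xs n = {1..n}"
definition Ys :: "nat \<Rightarrow> nat set" where "Ys m = {1..m}"

definition gamma :: "nat \<Rightarrow> nat \<Rightarrow> (nat \<times> nat) set \<Rightarrow> nat set \<Rightarrow> nat set \<times> nat set" where
  "gamma n m I C = (down I (Xs n) (up I (Ys m) C), up I (Ys m) C)"

definition mu :: "nat \<Rightarrow> nat \<Rightarrow> (nat \<times> nat) set \<Rightarrow> nat set \<Rightarrow> nat set \<times> nat set" where
  "mu n m I D = (down I (Xs n) D, up I (Ys m) (down I (Xs n) D))"

definition interval :: "nat \<Rightarrow> nat \<Rightarrow> (nat \<times> nat) set \<Rightarrow> nat set \<Rightarrow> nat set \<Rightarrow> (nat set \<times> nat set) set" where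
  "interval n m I C D = {c \<in> concepts (Xs n) (Ys m) I. concept_le (gamma n m I C) c \<and> concept_le c (mu n m I D)}"

end

theory Submission
  imports Defs
begin

theorem lemma3:
  fixes n m :: nat and I :: "(nat \<times> nat) set" and C D :: "nat set"
  assumes "I \<subseteq> Xs n \<times> Ys m"
    and "C \<subseteq> Xs n" and "D \<subseteq> Ys m"
    and "\<forall>i\<in>C. \<forall>j\<in>D. (i, j) \<in> I"
  shows "interval n m I C D =
    concepts (down I (Xs n) D) (up I (Ys m) C)
      {(i, j). i \<in> down I (Xs n) D \<and> j \<in> up I (Ys m) C \<and> (i, j) \<in> I}"
proof -
  note a = assms
  define A where "A = down I (Xs n) D"
  define B where "B = up I (Ys m) C"
  define J where "J = {(i, j). i \<in> A \<and> j \<in> B \<and> (i, j) \<in> I}"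
  have CA: "C \<subseteq> A" using a unfolding A_def down_def by auto
  have BY: "B \<subseteq> Ys m" unfolding B_def up_def by auto
  have AX: "A \<subseteq> Xs n" unfolding A_def down_def by auto
  have DB: "D \<subseteq> B" using a unfolding B_def up_def by auto
  show ?thesis unfolding A_def[symmetric] B_def[symmetric] J_def[symmetric]
  proof (intro set_eqI iffI)
    fix c assume c: "c \<in> interval n m I C D"
    obtain E F where cEF: "c = (E, F)" by (cases c)
    have EX: "E \<subseteq> Xs n" and FY: "F \<subseteq> Ys m" and FE: "up I (Ys m) E = F"
      and EF: "down I (Xs n) F = E"
      using c cEF unfolding interval_def concepts_def by auto
    have EA: "E \<subseteq> A" using c cEF unfolding interval_def concept_le_def mu_def A_def by auto
    have low: "down I (Xs n) B \<subseteq> E"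
      using c cEF unfolding interval_def concept_le_def gamma_def B_def by auto
    have CE: "C \<subseteq> E"
    proof
      fix i assume "i \<in> C"
      then have "i \<in> down I (Xs n) B" using a unfolding B_def down_def up_def by auto
      then show "i \<in> E" using low by auto
    qed
    have FB: "F \<subseteq> B" using CE FE unfolding B_def up_def by auto
    have "up J B E = F" using FE FB EA BY unfolding J_def up_def by auto
    moreover have "down J A F = E" using EF EA AX FB unfolding J_def down_def by auto
    ultimately show "c \<in> concepts A B J" using cEF EA FB unfolding concepts_def by auto
  next
    fix c assume c: "c \<in> concepts A B J"
    obtain E F where cEF: "c = (E, F)" by (cases c)
    have EA: "E \<subseteq> A" and FB: "F \<subseteq> B" and FE: "up J B E = F" and EF: "down J A F = E"
      using c cEF unfolding concepts_def by auto
    have CE: "C \<subseteq> E"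
    proof
      fix i assume i: "i \<in> C"
      have "i \<in> down J A F" using i CA FB a unfolding J_def down_def B_def up_def by auto
      then show "i \<in> E" using EF by simp
    qed
    have FE': "up I (Ys m) E = F"
    proof -
      have "up I (Ys m) E \<subseteq> B" using CE unfolding B_def up_def by auto
      then show ?thesis using FE EA BY unfolding J_def up_def by auto
    qed
    have DF: "D \<subseteq> F"
    proof
      fix j assume j: "j \<in> D"
      have "j \<in> up I (Ys m) E" using j EA a unfolding A_def down_def up_def by auto
      then show "j \<in> F" using FE' by simp
    qed
    have EF': "down I (Xs n) F = E"
    proof -
      have "down I (Xs n) F \<subseteq> A" using DF unfolding A_def down_def by auto
      then show ?thesis using EF FB AX unfolding J_def down_def by auto
    qed
    have EX: "E \<subseteq> Xs n" using EA unfolding A_def down_def by auto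
    have FY: "F \<subseteq> Ys m" using FB unfolding B_def up_def by auto
    have low: "down I (Xs n) B \<subseteq> E"
    proof -
      have "F \<subseteq> B" by fact
      then have "down I (Xs n) B \<subseteq> down I (Xs n) F" unfolding down_def by auto
      then show ?thesis using EF' by simp
    qed
    show "c \<in> interval n m I C D" using cEF EX FY FE' EF' low EA
      unfolding interval_def concepts_def concept_le_def gamma_def mu_def A_def B_def by auto
  qed
qed

end
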